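(* In the security-second routing model, for any destination $d$, attacker $m$, source AS $s$, and deployment (set of secure ASes) $S\subseteq V$, $s$ stabilizes to a route of the same type as any route in $\mathrm{BPR}(s,\emptyset,m,d)$.
   Context: An AS graph is an undirected graph $G=(V,E)$ of ASes; each edge is labeled customer–provider or peer–peer. Routing is to a destination $d$; $d$ announces "$d$" to neighbors; each other AS selects at most one route and announces it (prepended with itself) per the export policy (Ex): a route whose next hop is a customer is announced to all neighbors, otherwise only to customers. A route at $s$ is a customer/peer/provider route according to the relation of its next hop to $s$; its length is its number of hops in the announced AS path. Insecure ASes rank routes by (LP) customer over peer over provider, then (SP) shorter, then (TB) a fixed deterministic tie-break; in the security-second model, each secure AS (member of $S$) additionally prefers secure routes (all ASes on the route in $S$) over insecure ones, applied between LP and SP. Attack: attacker $m\ne d$ (not a neighbor of $d$) announces the bogus path "$m,d$" via insecure BGP to all neighbors. Perceivable routes: a simple route $R=(v_{i-1},\dots,v_1,d)$ is perceivable at $v_i$ if either (1) $R$ does not contain $m$ and for every $0<j<i$, $v_j$ announcing $(v_j,\dots,d)$ to $v_{j+1}$ does not violate Ex, or (2) $v_1=m$ and for every $1<j<i$, $v_j$ announcing $(v_j,\dots,d)$ to $v_{j+1}$ does not violate Ex. $\mathrm{PR}(s,m,d)$ is the set of perceivable routes at $s$; $\mathrm{BPR}(s,\emptyset,m,d)$ is the set of routes in $\mathrm{PR}(s,m,d)$ that $s$ prefers over all other perceivable routes according to the ranking before the tie-break step when no AS is secure (i.e., those of best LP type and, among them, shortest length). *)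

theory Defs
  imports Main "HOL-Library.Product_Lexorder"
begin

(* AS graph: prov u w  means  "w is a provider of u" (u is a customer of w);
   peer u w means u and w are peers. Every edge carries exactly one label. *)

definition adj :: "('v \<Rightarrow> 'v \<Rightarrow> bool) \<Rightarrow> ('v \<Rightarrow> 'v \<Rightarrow> bool) \<Rightarrow> 'v \<Rightarrow> 'v \<Rightarrow> bool" where
  "adj prov peer u w \<longleftrightarrow> prov u w \<or> prov w u \<or> peer u w"

definition as_graph :: "'v set \<Rightarrow> ('v \<Rightarrow> 'v \<Rightarrow> bool) \<Rightarrow> ('v \<Rightarrow> 'v \<Rightarrow> bool) \<Rightarrow> bool" where
  "as_graph V prov peer \<longleftrightarrow> finite V
     \<and> (\<forall>u w. prov u w \<longrightarrow> u \<in> V \<and> w \<in> V \<and> u \<noteq> w \<and> \<not> prov w u \<and> \<not> peer u w)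
     \<and> (\<forall>u w. peer u w \<longrightarrow> u \<in> V \<and> w \<in> V \<and> u \<noteq> w \<and> peer w u)"

definition gao_rexford :: "('v \<Rightarrow> 'v \<Rightarrow> bool) \<Rightarrow> bool" where
  "gao_rexford prov \<longleftrightarrow> acyclic {(u, w). prov u w}"

(* Relationship of neighbour w to AS s: 0 = customer, 1 = peer, 2 = provider *)
definition nbr_rank :: "('v \<Rightarrow> 'v \<Rightarrow> bool) \<Rightarrow> ('v \<Rightarrow> 'v \<Rightarrow> bool) \<Rightarrow> 'v \<Rightarrow> 'v \<Rightarrow> nat" where
  "nbr_rank prov peer s w = (if prov w s then 0 else if peer s w then 1 else 2)"

(* A route at s is represented by the full path [s, next hop, ..., d];
   its type is the relation of its next hop to s; its length is length - 1 hops. *)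
definition route_rank :: "('v \<Rightarrow> 'v \<Rightarrow> bool) \<Rightarrow> ('v \<Rightarrow> 'v \<Rightarrow> bool) \<Rightarrow> 'v list \<Rightarrow> nat" where
  "route_rank prov peer r = nbr_rank prov peer (r ! 0) (r ! 1)"

definition ex_ok :: "('v \<Rightarrow> 'v \<Rightarrow> bool) \<Rightarrow> 'v \<Rightarrow> 'v \<Rightarrow> 'v \<Rightarrow> bool" where
  "ex_ok prov x nh t \<longleftrightarrow> prov nh x \<or> prov t x"

(* Perceivable routes: p = [v_i, v_(i-1), ..., v_1, d] with v_i = s;
   position k of p holds v_(i-k). *)
definition perceivable :: "('v \<Rightarrow> 'v \<Rightarrow> bool) \<Rightarrow> ('v \<Rightarrow> 'v \<Rightarrow> bool) \<Rightarrow> 'v \<Rightarrow> 'v \<Rightarrow> 'v \<Rightarrow> 'v list \<Rightarrow> bool" where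
  "perceivable prov peer m d s p \<longleftrightarrow>
     2 \<le> length p \<and> hd p = s \<and> last p = d \<and> distinct p \<and>
     ((m \<notin> set p
        \<and> (\<forall>k. k + 1 < length p \<longrightarrow> adj prov peer (p ! k) (p ! (k + 1)))
        \<and> (\<forall>k. 1 \<le> k \<and> k + 1 < length p \<longrightarrow> ex_ok prov (p ! k) (p ! (k + 1)) (p ! (k - 1))))
      \<or>
      (p ! (length p - 2) = m
        \<and> (\<forall>k. k + 2 < length p \<longrightarrow> adj prov peer (p ! k) (p ! (k + 1)))
        \<and> (\<forall>k. 1 \<le> k \<and> k + 2 < length p \<longrightarrow> ex_ok prov (p ! k) (p ! (k + 1)) (p ! (k - 1)))))"

definition PR :: "('v \<Rightarrow> 'v \<Rightarrow> bool) \<Rightarrow> ('v \<Rightarrow> 'v \<Rightarrow> bool) \<Rightarrow> 'v \<Rightarrow> 'v \<Rightarrow> 'v \<Rightarrow> 'v list set" where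
  "PR prov peer s m d = {p. perceivable prov peer m d s p}"

definition BPR_empty :: "('v \<Rightarrow> 'v \<Rightarrow> bool) \<Rightarrow> ('v \<Rightarrow> 'v \<Rightarrow> bool) \<Rightarrow> 'v \<Rightarrow> 'v \<Rightarrow> 'v \<Rightarrow> 'v list set" where
  "BPR_empty prov peer s m d = {p \<in> PR prov peer s m d. \<forall>q \<in> PR prov peer s m d.
       route_rank prov peer p < route_rank prov peer q
     \<or> (route_rank prov peer p = route_rank prov peer q \<and> length p \<le> length q)}"

(* A route is secure if all ASes on it are secure; the attacker's bogus
   announcement is made via insecure BGP, so routes through m are insecure. *)
definition secure_route :: "'v set \<Rightarrow> 'v \<Rightarrow> 'v list \<Rightarrow> bool" where
  "secure_route S m r \<longleftrightarrow> set r \<subseteq> S \<and> m \<notin> set r"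

definition sec2_key :: "('v \<Rightarrow> 'v \<Rightarrow> bool) \<Rightarrow> ('v \<Rightarrow> 'v \<Rightarrow> bool) \<Rightarrow> 'v set \<Rightarrow> 'v \<Rightarrow> 'v \<Rightarrow> 'v list \<Rightarrow> nat \<times> nat \<times> nat" where
  "sec2_key prov peer S m v r =
     (route_rank prov peer r, (if v \<in> S \<and> \<not> secure_route S m r then 1 else 0), length r)"

definition avail :: "('v \<Rightarrow> 'v \<Rightarrow> bool) \<Rightarrow> ('v \<Rightarrow> 'v \<Rightarrow> bool) \<Rightarrow> 'v \<Rightarrow> 'v \<Rightarrow> ('v \<Rightarrow> 'v list option) \<Rightarrow> 'v \<Rightarrow> 'v list set" where
  "avail prov peer m d pi v = {v # q | q w. adj prov peer v w \<and> pi w = Some q \<and> v \<notin> set q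
       \<and> (w = d \<or> w = m \<or> ex_ok prov w (q ! 1) v)}"

definition stable_sec2 :: "'v set \<Rightarrow> ('v \<Rightarrow> 'v \<Rightarrow> bool) \<Rightarrow> ('v \<Rightarrow> 'v \<Rightarrow> bool) \<Rightarrow> 'v set
     \<Rightarrow> ('v \<Rightarrow> ('v list \<times> 'v list) set) \<Rightarrow> 'v \<Rightarrow> 'v \<Rightarrow> ('v \<Rightarrow> 'v list option) \<Rightarrow> bool" where
  "stable_sec2 V prov peer S tb m d pi \<longleftrightarrow>
     pi d = Some [d] \<and> pi m = Some [m, d] \<and>
     (\<forall>v \<in> V - {d, m}.
        (avail prov peer m d pi v = {} \<longrightarrow> pi v = None) \<and>
        (avail prov peer m d pi v \<noteq> {} \<longrightarrow>
           (\<exists>r \<in> avail prov peer m d pi v. pi v = Some r \<and>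
              (\<forall>r' \<in> avail prov peer m d pi v.
                  sec2_key prov peer S m v r < sec2_key prov peer S m v r'
                \<or> (sec2_key prov peer S m v r = sec2_key prov peer S m v r' \<and> (r, r') \<in> tb v)))))"

end

theory Submission
  imports Defs
begin

locale stab =
  fixes V :: "'v set" and prov peer :: "'v \<Rightarrow> 'v \<Rightarrow> bool" and S :: "'v set"
    and tb :: "'v \<Rightarrow> ('v list \<times> 'v list) set"
    and pi :: "'v \<Rightarrow> 'v list option" and d m :: 'v
  assumes G: "as_graph V prov peer" and dV: "d \<in> V" and mV: "m \<in> V" and md: "m \<noteq> d"
    and nadj: "\<not> adj prov peer m d"
    and st: "stable_sec2 V prov peer S tb m d pi"
begin

lemma pid: "pi d = Some [d]" using st unfolding stable_sec2_def by auto
lemma pim: "pi m = Some [m, d]" using st unfolding stable_sec2_def by auto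

lemma adjV: "adj prov peer u w \<Longrightarrow> u \<in> V \<and> w \<in> V"
  using G unfolding adj_def as_graph_def by blast

lemma prov_asym: "prov u w \<Longrightarrow> \<not> prov w u \<and> \<not> peer u w"
  using G unfolding as_graph_def by blast

abbreviation "AV v \<equiv> avail prov peer m d pi v"
abbreviation "K v r \<equiv> sec2_key prov peer S m v r"

lemma st_v:
  assumes "v \<in> V" "v \<noteq> d" "v \<noteq> m"
  shows "(AV v = {} \<longrightarrow> pi v = None) \<and>
        (AV v \<noteq> {} \<longrightarrow>
           (\<exists>r \<in> AV v. pi v = Some r \<and>
              (\<forall>r' \<in> AV v. K v r < K v r' \<or> (K v r = K v r' \<and> (r, r') \<in> tb v))))"
proof -
  have "\<forall>v \<in> V - {d, m}. (AV v = {} \<longrightarrow> pi v = None) \<and>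
        (AV v \<noteq> {} \<longrightarrow>
           (\<exists>r \<in> AV v. pi v = Some r \<and>
              (\<forall>r' \<in> AV v. K v r < K v r' \<or> (K v r = K v r' \<and> (r, r') \<in> tb v))))"
    using st unfolding stable_sec2_def by (elim conjE)
  then show ?thesis using assms by blast
qed

lemma pi_step:
  assumes "v \<in> V" "v \<noteq> d" "v \<noteq> m" "pi v = Some r"
  shows "\<exists>q w. r = v # q \<and> adj prov peer v w \<and> pi w = Some q \<and> v \<notin> set q
       \<and> (w = d \<or> w = m \<or> ex_ok prov w (q ! 1) v)"
proof -
  have "AV v \<noteq> {}"
    using st_v[OF assms(1-3)] assms(4) by auto
  then obtain r' where "r' \<in> AV v" "pi v = Some r'"
    using st_v[OF assms(1-3)] by blast
  then have "r \<in> AV v" using assms(4) by simp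
  then show ?thesis unfolding avail_def by blast
qed

lemma avail_best:
  assumes "v \<in> V" "v \<noteq> d" "v \<noteq> m" "r \<in> AV v"
  shows "\<exists>r'. pi v = Some r' \<and> route_rank prov peer r' \<le> route_rank prov peer r"
proof -
  have ne: "AV v \<noteq> {}" using assms by auto
  then obtain r' where r': "pi v = Some r'" "\<forall>r''\<in>AV v. K v r' < K v r''
                \<or> (K v r' = K v r'' \<and> (r', r'') \<in> tb v)"
    using st_v[OF assms(1-3)] by blast
  then have "K v r' < K v r \<or> (K v r' = K v r \<and> (r', r) \<in> tb v)"
    using assms(4) by blast
  then have "route_rank prov peer r' \<le> route_rank prov peer r"
    unfolding sec2_key_def by auto
  then show ?thesis using r' by blast
qed

lemma pi_induct:
  assumes "x \<in> V" "pi x = Some r"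
    and Pd: "P d [d]" and Pm: "P m [m, d]"
    and Ps: "\<And>v w q. v \<in> V \<Longrightarrow> v \<noteq> d \<Longrightarrow> v \<noteq> m \<Longrightarrow> pi v = Some (v # q) \<Longrightarrow> adj prov peer v w
       \<Longrightarrow> w \<in> V \<Longrightarrow> pi w = Some q \<Longrightarrow> v \<notin> set q \<Longrightarrow> (w = d \<or> w = m \<or> ex_ok prov w (q ! 1) v)
       \<Longrightarrow> P w q \<Longrightarrow> P v (v # q)"
  shows "P x r"
  using assms(1,2)
proof (induction "length r" arbitrary: x r rule: less_induct)
  case less
  show ?case
  proof (cases "x = d")
    case True then show ?thesis using less pid Pd by simp
  next
    case False
    show ?thesis
    proof (cases "x = m")
      case True then show ?thesis using less pim Pm by simp
    next
      case False2: False
      obtain q w where qw: "r = x # q" "adj prov peer x w" "pi w = Some q" "x \<notin> set q"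
         "w = d \<or> w = m \<or> ex_ok prov w (q ! 1) x"
        using pi_step[OF less(2) False False2 less(3)] by blast
      have "length q < length r" using qw by simp
      then have "P w q" using less(1) qw adjV by blast
      then show ?thesis using Ps[where v=x and w=w and q=q] qw less False False2 adjV by auto
    qed
  qed
qed

lemma pi_shape:
  assumes "x \<in> V" "pi x = Some r"
  shows "r \<noteq> [] \<and> hd r = x \<and> last r = d \<and> (x \<noteq> d \<longrightarrow> 2 \<le> length r)"
  using assms
  by (rule pi_induct) (use md in \<open>auto simp: Suc_le_eq\<close>)


lemma pi_tail:
  assumes "x \<in> V" "pi x = Some r"
  shows "\<forall>i<length r. pi (r ! i) = Some (drop i r)"
  using assms
proof (rule pi_induct[where P="\<lambda>x r. \<forall>i<length r. pi (r ! i) = Some (drop i r)"])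
  show "\<forall>i<length [d]. pi ([d] ! i) = Some (drop i [d])" using pid by simp
  show "\<forall>i<length [m, d]. pi ([m, d] ! i) = Some (drop i [m, d])"
    using pid pim by (auto simp: less_Suc_eq)
next
  fix v w q
  assume "pi v = Some (v # q)" "\<forall>i<length q. pi (q ! i) = Some (drop i q)"
  then show "\<forall>i<length (v # q). pi ((v # q) ! i) = Some (drop i (v # q))"
    by (auto simp: nth_Cons split: nat.splits)
qed

lemma rank_cons:
  assumes "q \<noteq> []" "hd q = w"
  shows "route_rank prov peer (v # q) = nbr_rank prov peer v w"
  using assms unfolding route_rank_def by (cases q) auto

lemma nbr0: "nbr_rank prov peer v w = 0 \<longleftrightarrow> prov w v"
  unfolding nbr_rank_def by auto

lemma pi_chain:
  assumes "x \<in> V" "pi x = Some r"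
  shows "route_rank prov peer r = 0 \<longrightarrow> (\<forall>j. j + 1 < length r \<and> r ! j \<noteq> m \<longrightarrow> prov (r ! (j + 1)) (r ! j))"
  using assms
proof (rule pi_induct[where P="\<lambda>x r. route_rank prov peer r = 0 \<longrightarrow> (\<forall>j. j + 1 < length r \<and> r ! j \<noteq> m \<longrightarrow> prov (r ! (j + 1)) (r ! j))"])
  show "route_rank prov peer [d] = 0 \<longrightarrow> (\<forall>j. j + 1 < length [d] \<and> [d] ! j \<noteq> m \<longrightarrow> prov ([d] ! (j + 1)) ([d] ! j))"
    by simp
  show "route_rank prov peer [m, d] = 0 \<longrightarrow> (\<forall>j. j + 1 < length [m, d] \<and> [m, d] ! j \<noteq> m \<longrightarrow> prov ([m, d] ! (j + 1)) ([m, d] ! j))"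
    by (auto simp: less_Suc_eq)
next
  fix v w q
  assume v: "v \<in> V" "v \<noteq> d" "v \<noteq> m" and w: "w \<in> V" "pi w = Some q"
    and ex: "w = d \<or> w = m \<or> ex_ok prov w (q ! 1) v"
    and IH: "route_rank prov peer q = 0 \<longrightarrow> (\<forall>j. j + 1 < length q \<and> q ! j \<noteq> m \<longrightarrow> prov (q ! (j + 1)) (q ! j))"
  have sh: "q \<noteq> []" "hd q = w" "last q = d" "w \<noteq> d \<longrightarrow> 2 \<le> length q" using pi_shape[OF w] by auto
  have q0: "q ! 0 = w" using sh by (cases q) auto
  show "route_rank prov peer (v # q) = 0 \<longrightarrow> (\<forall>j. j + 1 < length (v # q) \<and> (v # q) ! j \<noteq> m \<longrightarrow> prov ((v # q) ! (j + 1)) ((v # q) ! j))"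
  proof (intro impI allI)
    fix j
    assume r0: "route_rank prov peer (v # q) = 0" and j: "j + 1 < length (v # q) \<and> (v # q) ! j \<noteq> m"
    have pw: "prov w v" using r0 rank_cons[OF sh(1,2)] nbr0 by simp
    show "prov ((v # q) ! (j + 1)) ((v # q) ! j)"
    proof (cases j)
      case 0 then show ?thesis using pw q0 by simp
    next
      case (Suc i)
      have ji: "i + 1 < length q" "q ! i \<noteq> m" using j Suc by auto
      have "w \<noteq> d"
      proof
        assume "w = d" then have "q = [d]" using w pid by simp
        then show False using ji by simp
      qed
      moreover have "w \<noteq> m"
      proof
        assume "w = m" then have "q = [m, d]" using w pim by simp
        then show False using ji by (auto simp: less_Suc_eq)
      qed
      ultimately have "ex_ok prov w (q ! 1) v" using ex by simp
      then have "prov (q ! 1) w" using pw prov_asym unfolding ex_ok_def by blast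
      then have "route_rank prov peer q = 0" unfolding route_rank_def using q0 nbr0 by simp
      then have "prov (q ! (i + 1)) (q ! i)" using IH ji by blast
      then show ?thesis using Suc by simp
    qed
  qed
qed


lemma perc_ext:
  assumes P: "perceivable prov peer m d w q" and A: "adj prov peer x w" and X: "x \<notin> set q" "x \<noteq> m"
    and E: "w \<noteq> m \<Longrightarrow> ex_ok prov w (q ! 1) x"
  shows "perceivable prov peer m d x (x # q)"
proof -
  have L: "2 \<le> length q" "hd q = w" "last q = d" "distinct q"
    and C: "(m \<notin> set q
        \<and> (\<forall>k. k + 1 < length q \<longrightarrow> adj prov peer (q ! k) (q ! (k + 1)))
        \<and> (\<forall>k. 1 \<le> k \<and> k + 1 < length q \<longrightarrow> ex_ok prov (q ! k) (q ! (k + 1)) (q ! (k - 1))))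
      \<or>
      (q ! (length q - 2) = m
        \<and> (\<forall>k. k + 2 < length q \<longrightarrow> adj prov peer (q ! k) (q ! (k + 1)))
        \<and> (\<forall>k. 1 \<le> k \<and> k + 2 < length q \<longrightarrow> ex_ok prov (q ! k) (q ! (k + 1)) (q ! (k - 1))))"
    using P unfolding perceivable_def by auto
  have q0: "q ! 0 = w" using L by (cases q) auto
  have base: "2 \<le> length (x # q)" "hd (x # q) = x" "last (x # q) = last q" "distinct (x # q)"
    using L X by auto
  from C show ?thesis
  proof
    assume c1: "m \<notin> set q
        \<and> (\<forall>k. k + 1 < length q \<longrightarrow> adj prov peer (q ! k) (q ! (k + 1)))
        \<and> (\<forall>k. 1 \<le> k \<and> k + 1 < length q \<longrightarrow> ex_ok prov (q ! k) (q ! (k + 1)) (q ! (k - 1)))"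
    have wm: "w \<noteq> m" using c1 q0 L by (metis nth_mem le0 less_le_trans numeral_2_eq_2 less_Suc_eq_le)
    have a: "\<forall>k. k + 1 < length (x # q) \<longrightarrow> adj prov peer ((x # q) ! k) ((x # q) ! (k + 1))"
    proof (intro allI impI)
      fix k assume k: "k + 1 < length (x # q)"
      show "adj prov peer ((x # q) ! k) ((x # q) ! (k + 1))"
      proof (cases k)
        case 0 then show ?thesis using A q0 by simp
      next
        case (Suc i) then show ?thesis using k c1[THEN conjunct2, THEN conjunct1, rule_format, of i] by simp
      qed
    qed
    have e: "\<forall>k. 1 \<le> k \<and> k + 1 < length (x # q) \<longrightarrow> ex_ok prov ((x # q) ! k) ((x # q) ! (k + 1)) ((x # q) ! (k - 1))"
    proof (intro allI impI)
      fix k assume k: "1 \<le> k \<and> k + 1 < length (x # q)"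
      then obtain j where j: "k = Suc j" by (cases k) auto
      show "ex_ok prov ((x # q) ! k) ((x # q) ! (k + 1)) ((x # q) ! (k - 1))"
      proof (cases j)
        case 0 then show ?thesis using j E wm q0 by simp
      next
        case (Suc i) then show ?thesis using j k c1[THEN conjunct2, THEN conjunct2, rule_format, of "Suc i"] by simp
      qed
    qed
    show ?thesis unfolding perceivable_def using base L X a e c1 by auto
  next
    assume c2: "q ! (length q - 2) = m
        \<and> (\<forall>k. k + 2 < length q \<longrightarrow> adj prov peer (q ! k) (q ! (k + 1)))
        \<and> (\<forall>k. 1 \<le> k \<and> k + 2 < length q \<longrightarrow> ex_ok prov (q ! k) (q ! (k + 1)) (q ! (k - 1)))"
    have mpos: "(x # q) ! (length (x # q) - 2) = m"
    proof -
      have "length (x # q) - 2 = Suc (length q - 2)" using L by simp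
      then show ?thesis using c2 by simp
    qed
    have a: "\<forall>k. k + 2 < length (x # q) \<longrightarrow> adj prov peer ((x # q) ! k) ((x # q) ! (k + 1))"
    proof (intro allI impI)
      fix k assume k: "k + 2 < length (x # q)"
      show "adj prov peer ((x # q) ! k) ((x # q) ! (k + 1))"
      proof (cases k)
        case 0 then show ?thesis using A q0 by simp
      next
        case (Suc i) then show ?thesis using k c2[THEN conjunct2, THEN conjunct1, rule_format, of i] by simp
      qed
    qed
    have e: "\<forall>k. 1 \<le> k \<and> k + 2 < length (x # q) \<longrightarrow> ex_ok prov ((x # q) ! k) ((x # q) ! (k + 1)) ((x # q) ! (k - 1))"
    proof (intro allI impI)
      fix k assume k: "1 \<le> k \<and> k + 2 < length (x # q)"
      then obtain j where j: "k = Suc j" by (cases k) auto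
      show "ex_ok prov ((x # q) ! k) ((x # q) ! (k + 1)) ((x # q) ! (k - 1))"
      proof (cases j)
        case 0
        have "w \<noteq> m"
        proof
          assume wm: "w = m"
          have "q ! 0 = q ! (length q - 2)" using wm q0 c2 by simp
          moreover have "length q - 2 < length q" "0 < length q" using L by auto
          ultimately have "length q - 2 = 0" using L(4) nth_eq_iff_index_eq by metis
          then show False using k j 0 by simp
        qed
        then show ?thesis using j 0 E q0 by simp
      next
        case (Suc i) then show ?thesis using j k c2[THEN conjunct2, THEN conjunct2, rule_format, of "Suc i"] by simp
      qed
    qed
    show ?thesis unfolding perceivable_def using base L X a e mpos by auto
  qed
qed


lemma perc_first:
  assumes P: "perceivable prov peer m d v p" and vm: "v \<noteq> m"
  shows "2 \<le> length p \<and> hd p = v \<and> adj prov peer v (p ! 1) \<and> (p ! 1 = d \<longrightarrow> p = [v, d])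
      \<and> (p ! 1 = m \<longrightarrow> p = [v, m, d])
      \<and> (p ! 1 \<noteq> d \<and> p ! 1 \<noteq> m \<longrightarrow> 3 \<le> length p \<and> perceivable prov peer m d (p ! 1) (tl p)
            \<and> ex_ok prov (p ! 1) (p ! 2) v)"
proof -
  have L: "2 \<le> length p" "hd p = v" "last p = d" "distinct p"
    and C: "(m \<notin> set p
        \<and> (\<forall>k. k + 1 < length p \<longrightarrow> adj prov peer (p ! k) (p ! (k + 1)))
        \<and> (\<forall>k. 1 \<le> k \<and> k + 1 < length p \<longrightarrow> ex_ok prov (p ! k) (p ! (k + 1)) (p ! (k - 1))))
      \<or>
      (p ! (length p - 2) = m
        \<and> (\<forall>k. k + 2 < length p \<longrightarrow> adj prov peer (p ! k) (p ! (k + 1)))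
        \<and> (\<forall>k. 1 \<le> k \<and> k + 2 < length p \<longrightarrow> ex_ok prov (p ! k) (p ! (k + 1)) (p ! (k - 1))))"
    using P unfolding perceivable_def by auto
  obtain p' where pp: "p = v # p'" using L by (cases p) auto
  have lp: "2 \<le> Suc (length p')" using L pp by simp
  have lastp: "p ! (length p - 1) = d" using L last_conv_nth[of p] by (cases p) auto
  have idx: "\<And>i j. i < length p \<Longrightarrow> j < length p \<Longrightarrow> p ! i = p ! j \<Longrightarrow> i = j"
    using L(4) nth_eq_iff_index_eq by metis
  have p0: "p ! 0 = v" using pp by simp
  have D: "p ! 1 = d \<longrightarrow> p = [v, d]"
  proof
    assume "p ! 1 = d"
    then have "1 = length p - 1" using idx[of 1 "length p - 1"] lastp L by simp
    then have "length p' = 1" using pp by simp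
    then obtain a where "p' = [a]" by (cases p') auto
    then show "p = [v, d]" using pp `p ! 1 = d` by simp
  qed
  have M: "p ! 1 = m \<longrightarrow> p = [v, m, d]"
  proof
    assume pm: "p ! 1 = m"
    have "m \<in> set p" using pm L by (metis One_nat_def Suc_1 Suc_le_lessD nth_mem)
    then have c2: "p ! (length p - 2) = m" using C by blast
    then have "1 = length p - 2" using idx[of 1 "length p - 2"] pm L by simp
    then have "length p' = 2" using pp by simp
    then obtain a b where "p' = [a, b]" by (cases p'; cases "tl p'") auto
    then show "p = [v, m, d]" using pp pm L by simp
  qed
  have A: "adj prov peer v (p ! 1)"
    using C
  proof
    assume c1: "m \<notin> set p
        \<and> (\<forall>k. k + 1 < length p \<longrightarrow> adj prov peer (p ! k) (p ! (k + 1)))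
        \<and> (\<forall>k. 1 \<le> k \<and> k + 1 < length p \<longrightarrow> ex_ok prov (p ! k) (p ! (k + 1)) (p ! (k - 1)))"
    then show ?thesis using L p0 c1[THEN conjunct2, THEN conjunct1, rule_format, of 0] by simp
  next
    assume c2: "p ! (length p - 2) = m
        \<and> (\<forall>k. k + 2 < length p \<longrightarrow> adj prov peer (p ! k) (p ! (k + 1)))
        \<and> (\<forall>k. 1 \<le> k \<and> k + 2 < length p \<longrightarrow> ex_ok prov (p ! k) (p ! (k + 1)) (p ! (k - 1)))"
    have "length p \<noteq> 2" using c2 p0 vm by auto
    then show ?thesis using L p0 c2[THEN conjunct2, THEN conjunct1, rule_format, of 0] by simp
  qed
  have T: "p ! 1 \<noteq> d \<and> p ! 1 \<noteq> m \<longrightarrow> 3 \<le> length p \<and> perceivable prov peer m d (p ! 1) (tl p)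
            \<and> ex_ok prov (p ! 1) (p ! 2) v"
  proof
    assume nd: "p ! 1 \<noteq> d \<and> p ! 1 \<noteq> m"
    have l3: "3 \<le> length p"
    proof (rule ccontr)
      assume "\<not> 3 \<le> length p"
      then have "length p = 2" using L by simp
      then show False using lastp nd by simp
    qed
    have nep: "p' \<noteq> []" using l3 pp by auto
    have b2: "hd p' = p ! 1" using pp nep by (simp add: hd_conv_nth)
    have b3: "last p' = d" using L(3) pp nep by simp
    have b4: "distinct p'" using L(4) pp by simp
    have b1: "2 \<le> length p'" using l3 pp by simp
    note base = b1 b2 b3 b4
    have tp: "tl p = p'" using pp by simp
    from C have "perceivable prov peer m d (p ! 1) p' \<and> ex_ok prov (p ! 1) (p ! 2) v"
    proof
      assume c1: "m \<notin> set p
        \<and> (\<forall>k. k + 1 < length p \<longrightarrow> adj prov peer (p ! k) (p ! (k + 1)))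
        \<and> (\<forall>k. 1 \<le> k \<and> k + 1 < length p \<longrightarrow> ex_ok prov (p ! k) (p ! (k + 1)) (p ! (k - 1)))"
      have a: "\<forall>k. k + 1 < length p' \<longrightarrow> adj prov peer (p' ! k) (p' ! (k + 1))"
      proof (intro allI impI)
        fix k assume "k + 1 < length p'"
        then show "adj prov peer (p' ! k) (p' ! (k + 1))"
          using c1[THEN conjunct2, THEN conjunct1, rule_format, of "Suc k"] pp by simp
      qed
      have e: "\<forall>k. 1 \<le> k \<and> k + 1 < length p' \<longrightarrow> ex_ok prov (p' ! k) (p' ! (k + 1)) (p' ! (k - 1))"
      proof (intro allI impI)
        fix k assume k: "1 \<le> k \<and> k + 1 < length p'"
        then obtain j where j: "k = Suc j" by (cases k) auto
        show "ex_ok prov (p' ! k) (p' ! (k + 1)) (p' ! (k - 1))"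
          using c1[THEN conjunct2, THEN conjunct2, rule_format, of "Suc k"] pp k j by simp
      qed
      have "ex_ok prov (p ! 1) (p ! 2) v"
        using c1[THEN conjunct2, THEN conjunct2, rule_format, of 1] l3 p0 by (simp add: numeral_2_eq_2)
      moreover have "m \<notin> set p'" using c1 pp by simp
      ultimately show ?thesis unfolding perceivable_def using base a e by auto
    next
      assume c2: "p ! (length p - 2) = m
        \<and> (\<forall>k. k + 2 < length p \<longrightarrow> adj prov peer (p ! k) (p ! (k + 1)))
        \<and> (\<forall>k. 1 \<le> k \<and> k + 2 < length p \<longrightarrow> ex_ok prov (p ! k) (p ! (k + 1)) (p ! (k - 1)))"
      have a: "\<forall>k. k + 2 < length p' \<longrightarrow> adj prov peer (p' ! k) (p' ! (k + 1))"
      proof (intro allI impI)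
        fix k assume "k + 2 < length p'"
        then show "adj prov peer (p' ! k) (p' ! (k + 1))"
          using c2[THEN conjunct2, THEN conjunct1, rule_format, of "Suc k"] pp by simp
      qed
      have e: "\<forall>k. 1 \<le> k \<and> k + 2 < length p' \<longrightarrow> ex_ok prov (p' ! k) (p' ! (k + 1)) (p' ! (k - 1))"
      proof (intro allI impI)
        fix k assume k: "1 \<le> k \<and> k + 2 < length p'"
        then obtain j where j: "k = Suc j" by (cases k) auto
        show "ex_ok prov (p' ! k) (p' ! (k + 1)) (p' ! (k - 1))"
          using c2[THEN conjunct2, THEN conjunct2, rule_format, of "Suc k"] pp k j by simp
      qed
      have mp': "p' ! (length p' - 2) = m"
      proof -
        have "length p - 2 = Suc (length p' - 2)" using pp base by simp
        then show ?thesis using c2 pp by simp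
      qed
      have "length p - 2 \<noteq> 1" using c2 nd by auto
      then have "3 < length p" using l3 by simp
      then have "ex_ok prov (p ! 1) (p ! 2) v"
        using c2[THEN conjunct2, THEN conjunct2, rule_format, of 1] p0 by (simp add: numeral_2_eq_2)
      then show ?thesis unfolding perceivable_def using base a e mp' by auto
    qed
    then show "3 \<le> length p \<and> perceivable prov peer m d (p ! 1) (tl p) \<and> ex_ok prov (p ! 1) (p ! 2) v"
      using l3 tp by simp
  qed
  show ?thesis using L A D M T by blast
qed


lemma perc_nd: "perceivable prov peer m d v p \<Longrightarrow> v \<noteq> d"
proof -
  assume P: "perceivable prov peer m d v p"
  then have L: "2 \<le> length p" "hd p = v" "last p = d" "distinct p" unfolding perceivable_def by auto
  obtain p' where pp: "p = v # p'" using L by (cases p) auto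
  have "p' \<noteq> []" using L pp by auto
  then have "last p' \<in> set p'" "last p = last p'" using pp by auto
  then show "v \<noteq> d" using L pp by auto
qed

lemma perc_pi:
  assumes "x \<in> V" "pi x = Some r"
  shows "x \<noteq> d \<longrightarrow> perceivable prov peer m d x r"
  using assms
proof (rule pi_induct[where P="\<lambda>x r. x \<noteq> d \<longrightarrow> perceivable prov peer m d x r"])
  show "d \<noteq> d \<longrightarrow> perceivable prov peer m d d [d]" by simp
  show "m \<noteq> d \<longrightarrow> perceivable prov peer m d m [m, d]"
    unfolding perceivable_def using md by auto
next
  fix v w q
  assume v: "v \<in> V" "v \<noteq> d" "v \<noteq> m" and a: "adj prov peer v w" and w: "w \<in> V" "pi w = Some q"
    and nv: "v \<notin> set q"
    and ex: "w = d \<or> w = m \<or> ex_ok prov w (q ! 1) v"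
    and IH: "w \<noteq> d \<longrightarrow> perceivable prov peer m d w q"
  show "v \<noteq> d \<longrightarrow> perceivable prov peer m d v (v # q)"
  proof (cases "w = d")
    case True
    then have "q = [d]" using w pid by simp
    then show ?thesis unfolding perceivable_def using v md a True by (auto simp: less_Suc_eq)
  next
    case False
    then show ?thesis using perc_ext[OF _ a nv v(3)] IH ex by auto
  qed
qed

lemma step:
  assumes v: "v \<in> V" "v \<noteq> d" "v \<noteq> m" and a: "adj prov peer v w" and w: "pi w = Some q"
    and nv: "v \<notin> set q" and ex: "w = d \<or> w = m \<or> ex_ok prov w (q ! 1) v"
  shows "\<exists>r. pi v = Some r \<and> route_rank prov peer r \<le> nbr_rank prov peer v w"
proof -
  have wV: "w \<in> V" using adjV a by blast
  have "v # q \<in> AV v" unfolding avail_def using a w nv ex by blast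
  then obtain r where "pi v = Some r" "route_rank prov peer r \<le> route_rank prov peer (v # q)"
    using avail_best v by blast
  moreover have "route_rank prov peer (v # q) = nbr_rank prov peer v w"
    using pi_shape[OF wV w] rank_cons by blast
  ultimately show ?thesis by auto
qed

lemma mainD:
  assumes "perceivable prov peer m d v p" "v \<in> V" "v \<noteq> d" "v \<noteq> m"
  shows "\<exists>r. pi v = Some r \<and> (route_rank prov peer p \<le> 1 \<longrightarrow> route_rank prov peer r \<le> route_rank prov peer p)"
  using assms
proof (induction "length p" arbitrary: v p rule: less_induct)
  case less
  note P = less(2) and v = less(3-5)
  have F: "2 \<le> length p \<and> hd p = v \<and> adj prov peer v (p ! 1) \<and> (p ! 1 = d \<longrightarrow> p = [v, d])
      \<and> (p ! 1 = m \<longrightarrow> p = [v, m, d])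
      \<and> (p ! 1 \<noteq> d \<and> p ! 1 \<noteq> m \<longrightarrow> 3 \<le> length p \<and> perceivable prov peer m d (p ! 1) (tl p)
            \<and> ex_ok prov (p ! 1) (p ! 2) v)" using perc_first[OF P v(3)] .
  have p0: "p ! 0 = v" using F by (cases p) auto
  have rp: "route_rank prov peer p = nbr_rank prov peer v (p ! 1)" unfolding route_rank_def using p0 by simp
  define v1 where "v1 = p ! 1"
  have a: "adj prov peer v v1" using F v1_def by simp
  show ?case
  proof (cases "v1 = d")
    case True
    have "\<exists>r. pi v = Some r \<and> route_rank prov peer r \<le> nbr_rank prov peer v d"
      using step[OF v, of d "[d]"] a True pid v by auto
    then show ?thesis using rp True v1_def by auto
  next
    case nd: False
    show ?thesis
    proof (cases "v1 = m")
      case True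
      have "\<exists>r. pi v = Some r \<and> route_rank prov peer r \<le> nbr_rank prov peer v m"
        using step[OF v, of m "[m, d]"] a True pim v by auto
      then show ?thesis using rp True v1_def by auto
    next
      case nm: False
      have l3: "3 \<le> length p" and Pt: "perceivable prov peer m d v1 (tl p)"
        and ex: "ex_ok prov v1 (p ! 2) v" using F nd nm v1_def by auto
      have v1V: "v1 \<in> V" using adjV a by blast
      have "length (tl p) < length p" using l3 by simp
      then obtain r1 where r1: "pi v1 = Some r1"
        and r1r: "route_rank prov peer (tl p) \<le> 1 \<longrightarrow> route_rank prov peer r1 \<le> route_rank prov peer (tl p)"
        using less(1)[OF _ Pt v1V nd nm] by blast
      have sh: "r1 \<noteq> []" "hd r1 = v1" "last r1 = d" "2 \<le> length r1" using pi_shape[OF v1V r1] nd by auto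
      have r10: "r1 ! 0 = v1" using sh by (cases r1) auto
      have rt: "route_rank prov peer (tl p) = nbr_rank prov peer v1 (p ! 2)"
        unfolding route_rank_def using l3 v1_def by (simp add: nth_tl numeral_2_eq_2)
      have X: "\<not> prov v v1 \<Longrightarrow> route_rank prov peer r1 = 0"
      proof -
        assume "\<not> prov v v1"
        then have "prov (p ! 2) v1" using ex unfolding ex_ok_def by blast
        then have "route_rank prov peer (tl p) = 0" using rt nbr0 by simp
        then show ?thesis using r1r by simp
      qed
      have exr: "ex_ok prov v1 (r1 ! 1) v"
      proof (cases "prov v v1")
        case True then show ?thesis unfolding ex_ok_def by blast
      next
        case False
        then have "route_rank prov peer r1 = 0" using X by blast
        then have "prov (r1 ! 1) v1" unfolding route_rank_def using r10 nbr0 by simp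
        then show ?thesis unfolding ex_ok_def by blast
      qed
      show ?thesis
      proof (cases "v \<in> set r1")
        case False
        have "\<exists>r. pi v = Some r \<and> route_rank prov peer r \<le> nbr_rank prov peer v v1"
          using step[OF v a r1 False] exr by blast
        then show ?thesis using rp v1_def by auto
      next
        case True
        then obtain i where i: "i < length r1" "r1 ! i = v" by (metis in_set_conv_nth)
        have pv: "pi v = Some (drop i r1)" using pi_tail[OF v1V r1] i by auto
        have "route_rank prov peer p \<le> 1 \<longrightarrow> route_rank prov peer (drop i r1) \<le> route_rank prov peer p"
        proof
          assume "route_rank prov peer p \<le> 1"
          then have "nbr_rank prov peer v v1 \<le> 1" using rp v1_def by simp
          then have "prov v1 v \<or> peer v v1" unfolding nbr_rank_def by (auto split: if_splits)
          then have "\<not> prov v v1" using prov_asym by blast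
          then have r0: "route_rank prov peer r1 = 0" using X by blast
          have "i \<noteq> length r1 - 1"
          proof
            assume "i = length r1 - 1"
            then have "r1 ! i = last r1" using sh by (simp add: last_conv_nth)
            then show False using i sh v by simp
          qed
          then have i1: "i + 1 < length r1" using i by simp
          then have "prov (r1 ! (i + 1)) (r1 ! i)" using pi_chain[OF v1V r1] r0 i v by blast
          then have "route_rank prov peer (drop i r1) = 0"
            unfolding route_rank_def using i1 nbr0 by simp
          then show "route_rank prov peer (drop i r1) \<le> route_rank prov peer p" by simp
        qed
        then show ?thesis using pv by blast
      qed
    qed
  qed
qed

end

lemma nbr_le2: "route_rank prov peer r \<le> 2"
  unfolding route_rank_def nbr_rank_def by auto

theorem mainTheorem7:
  fixes V S :: "'v set" and prov peer :: "'v \<Rightarrow> 'v \<Rightarrow> bool"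
    and tb :: "'v \<Rightarrow> ('v list \<times> 'v list) set"
    and pi :: "'v \<Rightarrow> 'v list option" and d m s :: 'v and R :: "'v list"
  assumes "as_graph V prov peer" and "gao_rexford prov"
    and "d \<in> V" and "m \<in> V" and "s \<in> V" and "m \<noteq> d" and "\<not> adj prov peer m d"
    and "s \<noteq> m" and "S \<subseteq> V"
    and "\<forall>v. linear_order (tb v)"
    and "stable_sec2 V prov peer S tb m d pi"
    and "R \<in> BPR_empty prov peer s m d"
  shows "\<exists>r. pi s = Some r \<and> route_rank prov peer r = route_rank prov peer R"
proof -
  interpret stab V prov peer S tb pi d m
    using assms by (unfold_locales) auto
  have B: "R \<in> PR prov peer s m d" "\<forall>q \<in> PR prov peer s m d.
       route_rank prov peer R < route_rank prov peer q
     \<or> (route_rank prov peer R = route_rank prov peer q \<and> length R \<le> length q)"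
    using assms(12) unfolding BPR_empty_def by auto
  have PR: "perceivable prov peer m d s R" using B(1) unfolding PR_def by simp
  have sd: "s \<noteq> d" using perc_nd PR by blast
  obtain r where r: "pi s = Some r"
    and rr: "route_rank prov peer R \<le> 1 \<longrightarrow> route_rank prov peer r \<le> route_rank prov peer R"
    using mainD[OF PR assms(5) sd assms(8)] by blast
  have "perceivable prov peer m d s r" using perc_pi[OF assms(5) r] sd by blast
  then have "r \<in> PR prov peer s m d" unfolding PR_def by simp
  then have "route_rank prov peer R \<le> route_rank prov peer r" using B(2) by force
  then have "route_rank prov peer r = route_rank prov peer R"
    using rr nbr_le2[of prov peer r] nbr_le2[of prov peer R] by linarith
  then show ?thesis using r by blast
qed

end
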